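(* Let $S_j$, $j\in\mathbb{Z}^d$, be local potentials satisfying (A)–(E). Let $(p_1,q_1),\dots,(p_d,q_d)\in\mathbb{Z}^d\times\mathbb{Z}$ be such that $p_1,\dots,p_d$ are linearly independent. Then the periodic action $W_{p,q}:\mathbb{X}_{p,q}\to\mathbb{R}$ attains its minimum on $\mathbb{X}_{p,q}$.
   Context: Notation: $\|i\|=\sum_{k=1}^d|i_k|$ for $i\in\mathbb{Z}^d$, $B_j^r=\{k\in\mathbb{Z}^d:\|k-j\|\le r\}$, and $(\tau_{k,l}x)_i=x_{i+k}+l$ for $(k,l)\in\mathbb{Z}^d\times\mathbb{Z}$, $x\in\mathbb{R}^{\mathbb{Z}^d}$. Local potentials are functions $S_j:\mathbb{R}^{\mathbb{Z}^d}\to\mathbb{R}$, $j\in\mathbb{Z}^d$, with: (A) there is $r\in(0,\infty)$ and $C^2$ functions $s_j:\mathbb{R}^{B_j^r}\to\mathbb{R}$ with $S_j(x)=s_j(x|_{B_j^r})$ (partial derivatives $\partial_{i_1\dots i_m}S_j$ are those of $s_j$, and zero if some index lies outside $B_j^r$); (B) $S_j(\tau_{k,l}x)=S_{j+k}(x)$ for all $j,k,l$; (C) each $S_j$ is bounded below and $S_j(x)\to\infty$ as $|x_k-x_j|\to\infty$ for every $k$ with $\|k-j\|=1$; (D) $\partial_{i,k}S_j\le 0$ for all $j$ and $i\ne k$, and $\partial_{i,k}S_i<0$ whenever $\|i-k\|=1$; (E) there is $C$ with $|\partial_{i,k}S_j|\le C$ for all $i,j,k$. Let $p$ denote the $d\times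 d$ integer matrix with columns $p_1,\dots,p_d$, $B_p=p([0,1)^d)\cap\mathbb{Z}^d$, $\mathbb{X}_{p,q}=\{x\in\mathbb{R}^{\mathbb{Z}^d}:\tau_{p_j,q_j}x=x,\ j=1,\dots,d\}$, and $W_{p,q}(x)=\sum_{j\in B_p}S_j(x)$ for $x\in\mathbb{X}_{p,q}$. A minimizer of $W_{p,q}$ on $\mathbb{X}_{p,q}$ is called a $p,q$-minimizer. *)

theory Defs
  imports "HOL-Analysis.Analysis"
begin

text \<open>Lattice points of Z^d are modelled as int^'d with 'd a finite index type
(d = CARD('d)); configurations x in R^(Z^d) are functions int^'d => real.\<close>

definition l1norm :: "int^'d \<Rightarrow> int" where
  "l1norm i = (\<Sum>k\<in>UNIV. \<bar>i $ k\<bar>)"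

definition ball1 :: "int^'d \<Rightarrow> real \<Rightarrow> (int^'d) set" where
  "ball1 j r = {k. real_of_int (l1norm (k - j)) \<le> r}"

definition tau :: "int^'d \<Rightarrow> int \<Rightarrow> (int^'d \<Rightarrow> real) \<Rightarrow> (int^'d \<Rightarrow> real)" where
  "tau k l x = (\<lambda>i. x (i + k) + real_of_int l)"

definition pd1 :: "(('i \<Rightarrow> real) \<Rightarrow> real) \<Rightarrow> 'i \<Rightarrow> ('i \<Rightarrow> real) \<Rightarrow> real" where
  "pd1 f i x = deriv (\<lambda>t. f (x(i := t))) (x i)"

definition pd2 :: "(('i \<Rightarrow> real) \<Rightarrow> real) \<Rightarrow> 'i \<Rightarrow> 'i \<Rightarrow> ('i \<Rightarrow> real) \<Rightarrow> real" where
  "pd2 f i k x = pd1 (\<lambda>y. pd1 f k y) i x"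

text \<open>For a function depending only on finitely many coordinates this is exactly C^2
of the induced function of finitely many variables.\<close>
definition C2 :: "(('i \<Rightarrow> real) \<Rightarrow> real) \<Rightarrow> bool" where
  "C2 f \<longleftrightarrow>
     (\<forall>i x. (\<lambda>t. f (x(i := t))) differentiable (at (x i))) \<and>
     (\<forall>i. continuous_on UNIV (pd1 f i)) \<and>
     (\<forall>i k x. (\<lambda>t. pd1 f k (x(i := t))) differentiable (at (x i))) \<and>
     (\<forall>i k. continuous_on UNIV (pd2 f i k))"

definition local_potentials :: "(int^'d \<Rightarrow> (int^'d \<Rightarrow> real) \<Rightarrow> real) \<Rightarrow> bool" where
  "local_potentials S \<longleftrightarrow>
    \<comment> \<open>(A)\<close>
    (\<exists>r>0. (\<forall>j x y. (\<forall>k\<in>ball1 j r. x k = y k) \<longrightarrow> S j x = S j y) \<and> (\<forall>j. C2 (S j))) \<and>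
    \<comment> \<open>(B)\<close>
    (\<forall>j k l x. S j (tau k l x) = S (j + k) x) \<and>
    \<comment> \<open>(C)\<close>
    (\<forall>j. bdd_below (range (S j))) \<and>
    (\<forall>j k. l1norm (k - j) = 1 \<longrightarrow>
        (\<forall>M. \<exists>R. \<forall>x. \<bar>x k - x j\<bar> > R \<longrightarrow> S j x > M)) \<and>
    \<comment> \<open>(D)\<close>
    (\<forall>j i k x. i \<noteq> k \<longrightarrow> pd2 (S j) i k x \<le> 0) \<and>
    (\<forall>i k x. l1norm (i - k) = 1 \<longrightarrow> pd2 (S i) i k x < 0) \<and>
    \<comment> \<open>(E)\<close>
    (\<exists>C. \<forall>i j k x. \<bar>pd2 (S j) i k x\<bar> \<le> C)"

text \<open>p is given by its columns p j :: int^'d, j ranging over the index type 'd.\<close>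
definition lin_indep_cols :: "('d \<Rightarrow> int^'d) \<Rightarrow> bool" where
  "lin_indep_cols p \<longleftrightarrow>
     (\<forall>c::'d \<Rightarrow> real. (\<Sum>j\<in>UNIV. c j *\<^sub>R (\<chi> i. real_of_int (p j $ i))) = 0 \<longrightarrow> (\<forall>j. c j = 0))"

definition Bp :: "('d \<Rightarrow> int^'d) \<Rightarrow> (int^'d) set" where
  "Bp p = {m. \<exists>t::'d \<Rightarrow> real. (\<forall>j. 0 \<le> t j \<and> t j < 1) \<and>
              (\<forall>i. real_of_int (m $ i) = (\<Sum>j\<in>UNIV. t j * real_of_int (p j $ i)))}"

definition Xpq :: "('d \<Rightarrow> int^'d) \<Rightarrow> ('d \<Rightarrow> int) \<Rightarrow> (int^'d \<Rightarrow> real) set" where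
  "Xpq p q = {x. \<forall>j. tau (p j) (q j) x = x}"

definition Wpq :: "(int^'d \<Rightarrow> (int^'d \<Rightarrow> real) \<Rightarrow> real) \<Rightarrow> ('d \<Rightarrow> int^'d) \<Rightarrow>
                   (int^'d \<Rightarrow> real) \<Rightarrow> real" where
  "Wpq S p x = (\<Sum>j\<in>Bp p. S j x)"

end

theory Submission
  imports Defs
begin


lemma mvt_bound:
  fixes g g' :: "real \<Rightarrow> real"
  assumes d: "\<And>t. min a b \<le> t \<Longrightarrow> t \<le> max a b \<Longrightarrow> DERIV g t :> g' t"
      and bd: "\<And>t. min a b \<le> t \<Longrightarrow> t \<le> max a b \<Longrightarrow> \<bar>g' t\<bar> \<le> K"
  shows "\<bar>g b - g a\<bar> \<le> K * \<bar>b - a\<bar>"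
proof (cases a b rule: linorder_cases)
  case less
  then obtain z where z: "a < z" "z < b" "g b - g a = (b - a) * g' z"
    using MVT2[of a b g g'] d by force
  have "\<bar>g' z\<bar> \<le> K" using bd[of z] z less by auto
  then show ?thesis using z less by (simp add: abs_mult mult_right_mono mult.commute)
next
  case equal then show ?thesis using bd[of a] by auto
next
  case greater
  then obtain z where z: "b < z" "z < a" "g a - g b = (a - b) * g' z"
    using MVT2[of b a g g'] d by force
  have "\<bar>g' z\<bar> \<le> K" using bd[of z] z greater by auto
  then have "\<bar>g a - g b\<bar> \<le> K * \<bar>a - b\<bar>" using z greater by (simp add: abs_mult mult_right_mono mult.commute)
  then show ?thesis by (simp add: abs_minus_commute)
qed

lemma lip_box:
  fixes f :: "('i \<Rightarrow> real) \<Rightarrow> real" and c :: "'i \<Rightarrow> real"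
  assumes fin: "finite F"
    and dep: "\<And>x y. (\<forall>k\<in>F. x k = y k) \<Longrightarrow> f x = f y"
    and der: "\<And>a x t. DERIV (\<lambda>s. f (x(a:=s))) t :> D a (x(a:=t))"
    and bnd: "\<And>a z. a\<in>F \<Longrightarrow> (\<forall>i. \<bar>z i\<bar> \<le> c i) \<Longrightarrow> \<bar>D a z\<bar> \<le> Kb a"
    and y: "\<forall>i. \<bar>y i\<bar> \<le> c i" and z: "\<forall>i. \<bar>z i\<bar> \<le> c i"
  shows "\<bar>f y - f z\<bar> \<le> (\<Sum>a\<in>F. Kb a * \<bar>y a - z a\<bar>)"
proof -
  have main: "finite G \<Longrightarrow> G \<subseteq> F \<Longrightarrow> \<bar>f (\<lambda>k. if k\<in>G then y k else z k) - f z\<bar> \<le> (\<Sum>a\<in>G. Kb a * \<bar>y a - z a\<bar>)" for G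
  proof (induction G rule: finite_induct)
    case empty then show ?case by simp
  next
    case (insert a G)
    define w where "w = (\<lambda>k. if k\<in>G then y k else z k)"
    have eq: "(\<lambda>k. if k \<in> insert a G then y k else z k) = w(a := y a)"
      unfolding w_def by auto
    have wa: "w(a := z a) = w" unfolding w_def using insert by auto
    have wQ: "\<forall>i. \<bar>w i\<bar> \<le> c i" using y z unfolding w_def by auto
    have aF: "a \<in> F" using insert by auto
    have "\<bar>f (w(a:=y a)) - f (w(a:=z a))\<bar> \<le> Kb a * \<bar>y a - z a\<bar>"
    proof (rule mvt_bound[where g' = "\<lambda>s. D a (w(a:=s))"])
      fix t assume "min (z a) (y a) \<le> t" "t \<le> max (z a) (y a)"
      moreover have "\<bar>y a\<bar> \<le> c a" "\<bar>z a\<bar> \<le> c a" using y z by auto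
      ultimately have "\<bar>t\<bar> \<le> c a" by (auto simp: abs_le_iff min_def max_def split: if_splits)
      then have "\<forall>i. \<bar>(w(a:=t)) i\<bar> \<le> c i" using wQ by auto
      then show "\<bar>D a (w(a:=t))\<bar> \<le> Kb a" using bnd aF by blast
    next
      fix t show "DERIV (\<lambda>s. f (w(a:=s))) t :> D a (w(a:=t))" by (rule der)
    qed
    then have "\<bar>f (w(a:=y a)) - f w\<bar> \<le> Kb a * \<bar>y a - z a\<bar>" using wa by simp
    moreover have "\<bar>f w - f z\<bar> \<le> (\<Sum>a\<in>G. Kb a * \<bar>y a - z a\<bar>)"
      using insert unfolding w_def by auto
    ultimately show ?case using insert eq by simp
  qed
  have "f (\<lambda>k. if k\<in>F then y k else z k) = f y" by (rule dep) auto
  then show ?thesis using main[OF fin] by simp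
qed

lemma cont_local:
  fixes f :: "('i \<Rightarrow> real) \<Rightarrow> real" and c :: "'i \<Rightarrow> real"
  assumes fin: "finite F"
    and dep: "\<And>x y. (\<forall>k\<in>F. x k = y k) \<Longrightarrow> f x = f y"
    and c2: "C2 f"
  shows "continuous_on {x. \<forall>i. \<bar>x i\<bar> \<le> c i} f"
proof -
  define Q where "Q = {x::'i\<Rightarrow>real. \<forall>i. \<bar>x i\<bar> \<le> c i}"
  have der: "DERIV (\<lambda>s. f (x(a:=s))) t :> pd1 f a (x(a:=t))" for a x t
  proof -
    have "(\<lambda>s. f ((x(a:=t))(a:=s))) differentiable (at ((x(a:=t)) a))"
      using c2 unfolding C2_def by blast
    then have "(\<lambda>s. f (x(a:=s))) differentiable (at t)" by simp
    then have "DERIV (\<lambda>s. f (x(a:=s))) t :> deriv (\<lambda>s. f (x(a:=s))) t"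
      by (simp add: DERIV_deriv_iff_real_differentiable)
    moreover have "pd1 f a (x(a:=t)) = deriv (\<lambda>s. f (x(a:=s))) t"
      unfolding pd1_def by simp
    ultimately show ?thesis by simp
  qed
  have QE: "Q = PiE UNIV (\<lambda>i. {-c i..c i})"
    unfolding Q_def by (auto simp: PiE_iff abs_le_iff minus_le_iff)
  have "compactin (product_topology (\<lambda>_. euclidean) UNIV) (PiE UNIV (\<lambda>i. {-c i..c i::real}))"
    by (simp add: compactin_PiE)
  then have cQ: "compact Q" unfolding QE euclidean_product_topology by simp
  have "\<exists>K. \<forall>z\<in>Q. \<bar>pd1 f a z\<bar> \<le> K" for a
  proof -
    have "continuous_on Q (pd1 f a)"
      using c2 unfolding C2_def by (blast intro: continuous_on_subset)
    then have "compact (pd1 f a ` Q)" using cQ compact_continuous_image by blast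
    then have "bounded (pd1 f a ` Q)" by (rule compact_imp_bounded)
    then show ?thesis by (auto simp: bounded_real)
  qed
  then obtain Kb where Kb: "\<And>a z. z\<in>Q \<Longrightarrow> \<bar>pd1 f a z\<bar> \<le> Kb a" by metis
  have lip: "y\<in>Q \<Longrightarrow> z\<in>Q \<Longrightarrow> \<bar>f y - f z\<bar> \<le> (\<Sum>a\<in>F. Kb a * \<bar>y a - z a\<bar>)" for y z
    by (rule lip_box[OF fin dep der, of c Kb]) (use Kb in \<open>auto simp: Q_def\<close>)
  have "continuous_on Q f"
    unfolding continuous_on_def
  proof
    fix z assume zQ: "z \<in> Q"
    have ev: "\<forall>\<^sub>F y in at z within Q. y \<in> Q" by (simp add: eventually_at_filter)
    have coord: "((\<lambda>y. y a) \<longlongrightarrow> z a) (at z within Q)" for a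
    proof -
      have "continuous_on UNIV (\<lambda>y::'i\<Rightarrow>real. y a)" by simp
      then have "((\<lambda>y::'i\<Rightarrow>real. y a) \<longlongrightarrow> z a) (at z within UNIV)"
        unfolding continuous_on_def by blast
      then show ?thesis by (rule tendsto_within_subset) simp
    qed
    have "((\<lambda>y. \<Sum>a\<in>F. Kb a * \<bar>y a - z a\<bar>) \<longlongrightarrow> (\<Sum>a\<in>F. Kb a * \<bar>z a - z a\<bar>)) (at z within Q)"
      by (intro tendsto_intros coord)
    then have g0: "((\<lambda>y. \<Sum>a\<in>F. Kb a * \<bar>y a - z a\<bar>) \<longlongrightarrow> 0) (at z within Q)" by simp
    have "((\<lambda>y. f y - f z) \<longlongrightarrow> 0) (at z within Q)"
      by (rule Lim_null_comparison[OF eventually_mono[OF ev] g0]) (use lip zQ in auto)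
    then show "(f \<longlongrightarrow> f z) (at z within Q)" by (rule LIM_zero_cancel)
  qed
  then show ?thesis unfolding Q_def .
qed



lemma finite_int_box: "finite {k::int^'d. \<forall>m. \<bar>k$m\<bar> \<le> c m}"
proof -
  have "{k::int^'d. \<forall>m. \<bar>k$m\<bar> \<le> c m} \<subseteq> (\<lambda>f. \<chi> m. f m) ` (PiE UNIV (\<lambda>m. {-c m..c m}))"
  proof
    fix k assume "k \<in> {k::int^'d. \<forall>m. \<bar>k$m\<bar> \<le> c m}"
    then have "(\<lambda>m. k$m) \<in> PiE UNIV (\<lambda>m. {-c m..c m})" by (auto simp: PiE_iff abs_le_iff minus_le_iff)
    moreover have "k = (\<chi> m. (\<lambda>m. k$m) m)" by simp
    ultimately show "k \<in> (\<lambda>f. \<chi> m. f m) ` (PiE UNIV (\<lambda>m. {-c m..c m}))" by blast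
  qed
  then show ?thesis by (rule finite_subset) (intro finite_imageI finite_PiE; simp)
qed

lemma abs_le_l1norm: "\<bar>i$m\<bar> \<le> l1norm i"
  unfolding l1norm_def by (rule member_le_sum) auto

lemma finite_ball1: "finite (ball1 j r)"
proof -
  have "ball1 j r \<subseteq> (\<lambda>k. k + j) ` {k. \<forall>m. \<bar>k$m\<bar> \<le> \<lceil>r\<rceil>}"
  proof
    fix k assume "k \<in> ball1 j r"
    then have "real_of_int (l1norm (k - j)) \<le> r" by (simp add: ball1_def)
    have "\<bar>(k-j)$m\<bar> \<le> \<lceil>r\<rceil>" for m
    proof -
      have "real_of_int \<bar>(k-j)$m\<bar> \<le> real_of_int (l1norm (k - j))"
        using abs_le_l1norm[of "k-j" m] by (simp only: of_int_le_iff)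
      also have "\<dots> \<le> real_of_int \<lceil>r\<rceil>" using \<open>real_of_int (l1norm (k - j)) \<le> r\<close> le_of_int_ceiling[of r] by linarith
      finally show ?thesis by (simp only: of_int_le_iff)
    qed
    then have "\<forall>m. \<bar>(k-j)$m\<bar> \<le> \<lceil>r\<rceil>" by blast
    then show "k \<in> (\<lambda>k. k + j) ` {k. \<forall>m. \<bar>k$m\<bar> \<le> \<lceil>r\<rceil>}"
      by (rule_tac x="k - j" in image_eqI) auto
  qed
  then show ?thesis using finite_int_box by (rule finite_subset[OF _ finite_imageI])
qed

lemma finite_units: "finite {e::int^'d. l1norm e = 1}"
proof -
  have "{e::int^'d. l1norm e = 1} \<subseteq> {k. \<forall>m. \<bar>k$m\<bar> \<le> 1}"
  proof
    fix e :: "int^'d" assume "e \<in> {e::int^'d. l1norm e = 1}"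
    then show "e \<in> {k. \<forall>m. \<bar>k$m\<bar> \<le> 1}" using abs_le_l1norm[of e] by auto
  qed
  then show ?thesis using finite_int_box by (rule finite_subset)
qed

lemma finite_Bp: "finite (Bp p)"
proof -
  have "Bp p \<subseteq> {k. \<forall>i. \<bar>k$i\<bar> \<le> (\<Sum>j\<in>UNIV. \<bar>p j $ i\<bar>)}"
  proof
    fix m assume "m \<in> Bp p"
    then obtain t :: "'a \<Rightarrow> real" where t: "\<forall>j. 0 \<le> t j \<and> t j < 1"
      "\<forall>i. real_of_int (m $ i) = (\<Sum>j\<in>UNIV. t j * real_of_int (p j $ i))"
      unfolding Bp_def by blast
    have "\<bar>m$i\<bar> \<le> (\<Sum>j\<in>UNIV. \<bar>p j $ i\<bar>)" for i
    proof -
      have "\<bar>real_of_int (m $ i)\<bar> \<le> (\<Sum>j\<in>UNIV. \<bar>t j * real_of_int (p j $ i)\<bar>)"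
        unfolding t(2)[rule_format] by (rule sum_abs)
      also have "\<dots> \<le> (\<Sum>j\<in>UNIV. \<bar>real_of_int (p j $ i)\<bar>)"
      proof (rule sum_mono)
        fix j
        have "\<bar>t j\<bar> \<le> 1" using t(1) by (metis abs_of_nonneg less_eq_real_def)
        then show "\<bar>t j * real_of_int (p j $ i)\<bar> \<le> \<bar>real_of_int (p j $ i)\<bar>"
          by (simp add: abs_mult mult_left_le_one_le)
      qed
      finally show ?thesis by (simp only: of_int_abs[symmetric] of_int_sum[symmetric] of_int_le_iff)
    qed
    then show "m \<in> {k. \<forall>i. \<bar>k$i\<bar> \<le> (\<Sum>j\<in>UNIV. \<bar>p j $ i\<bar>)}" by simp
  qed
  then show ?thesis using finite_int_box by (rule finite_subset)
qed

definition rv :: "int^'d \<Rightarrow> real^'d" where "rv i = (\<chi> k. real_of_int (i $ k))"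

lemma if01: "(if P then (1::real) else 0) *\<^sub>R (x::'a::real_vector) = (if P then x else 0)" by simp

lemma rv_inj: assumes "lin_indep_cols p" shows "inj (\<lambda>j. rv (p j))"
proof
  fix a b assume ab: "rv (p a) = rv (p b)"
  show "a = b"
  proof (rule ccontr)
    assume "a \<noteq> b"
    define c where "c = (\<lambda>j. (if j = a then 1 else 0) - (if j = b then 1 else (0::real)))"
    have "(\<Sum>j\<in>UNIV. c j *\<^sub>R (\<chi> i. real_of_int (p j $ i))) = rv (p a) - rv (p b)"
      unfolding c_def rv_def by (simp add: scaleR_left_diff_distrib sum_subtractf if01 sum.delta)
    then have "c a = 0" using assms ab unfolding lin_indep_cols_def by auto
    then show False using \<open>a \<noteq> b\<close> unfolding c_def by simp
  qed
qed

lemma rv_indep: assumes "lin_indep_cols p" shows "independent (range (\<lambda>j. rv (p j)))"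
proof
  assume "dependent (range (\<lambda>j. rv (p j)))"
  then obtain u where u: "\<exists>v\<in>range (\<lambda>j. rv (p j)). u v \<noteq> 0"
     "(\<Sum>v\<in>range (\<lambda>j. rv (p j)). u v *\<^sub>R v) = 0"
    using dependent_finite[of "range (\<lambda>j. rv (p j))"] by auto
  have "(\<Sum>j\<in>UNIV. u (rv (p j)) *\<^sub>R rv (p j)) = 0"
    using u(2) sum.reindex[OF rv_inj[OF assms], of "\<lambda>v. u v *\<^sub>R v"] by simp
  then have H: "(\<Sum>j\<in>UNIV. (\<lambda>j. u (rv (p j))) j *\<^sub>R (\<chi> i. real_of_int (p j $ i))) = 0"
    unfolding rv_def by simp
  have "\<forall>j. u (rv (p j)) = 0" using assms[unfolded lin_indep_cols_def, rule_format, OF H] by simp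
  then show False using u(1) by auto
qed

lemma rv_span: fixes p :: "'b::finite \<Rightarrow> int^'b" assumes "lin_indep_cols p" shows "\<exists>t. w = (\<Sum>j\<in>UNIV. t j *\<^sub>R rv (p j))"
proof -
  have c: "card (range (\<lambda>j. rv (p j))) = CARD('b)"
    using card_image[OF rv_inj[OF assms]] by simp
  have "(UNIV :: (real^'b) set) \<subseteq> span (range (\<lambda>j. rv (p j)))"
    by (rule card_ge_dim_independent) (use rv_indep[OF assms] c in auto)
  then have "w \<in> span (range (\<lambda>j. rv (p j)))" by auto
  then obtain u where "w = (\<Sum>v\<in>range (\<lambda>j. rv (p j)). u v *\<^sub>R v)"
    using span_finite[of "range (\<lambda>j. rv (p j))"] by auto
  then have "w = (\<Sum>j\<in>UNIV. u (rv (p j)) *\<^sub>R rv (p j))"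
    using sum.reindex[OF rv_inj[OF assms], of "\<lambda>v. u v *\<^sub>R v"] by simp
  then show ?thesis by (intro exI)
qed



lemma decomp:
  fixes p :: "'d::finite \<Rightarrow> int^'d"
  assumes "lin_indep_cols p"
  shows "\<exists>b\<in>Bp p. \<exists>n::'d\<Rightarrow>int. i = b + (\<Sum>j\<in>UNIV. n j *s p j)"
proof -
  obtain t where t: "rv i = (\<Sum>j\<in>UNIV. t j *\<^sub>R rv (p j))" using rv_span[OF assms] by blast
  have comp: "real_of_int (i$k) = (\<Sum>j\<in>UNIV. t j * real_of_int (p j $ k))" for k
  proof -
    have "rv i $ k = (\<Sum>j\<in>UNIV. t j *\<^sub>R rv (p j)) $ k" using t by simp
    then show ?thesis by (simp add: rv_def)
  qed
  define n where "n j = \<lfloor>t j\<rfloor>" for j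
  define b where "b = i - (\<Sum>j\<in>UNIV. n j *s p j)"
  have "b \<in> Bp p" unfolding Bp_def
  proof (intro CollectI exI[of _ "\<lambda>j. t j - real_of_int (n j)"] conjI allI)
    fix j
    show "0 \<le> t j - real_of_int (n j)" unfolding n_def by linarith
    show "t j - real_of_int (n j) < 1" unfolding n_def by linarith
  next
    fix k
    have "real_of_int (b $ k) = real_of_int (i$k) - (\<Sum>j\<in>UNIV. real_of_int (n j) * real_of_int (p j $ k))"
      unfolding b_def by simp
    also have "\<dots> = (\<Sum>j\<in>UNIV. (t j - real_of_int (n j)) * real_of_int (p j $ k))"
      unfolding comp by (simp add: left_diff_distrib sum_subtractf)
    finally show "real_of_int (b $ k) = (\<Sum>j\<in>UNIV. (t j - real_of_int (n j)) * real_of_int (p j $ k))" .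
  qed
  moreover have "i = b + (\<Sum>j\<in>UNIV. n j *s p j)" unfolding b_def by simp
  ultimately show ?thesis by blast
qed

lemma lat:
  fixes p :: "'d::finite \<Rightarrow> int^'d"
  assumes "x \<in> Xpq p q"
  shows "x (i + (\<Sum>j\<in>UNIV. n j *s p j)) = x i - real_of_int (\<Sum>j\<in>UNIV. n j * q j)"
proof -
  define P where "P v c \<longleftrightarrow> (\<forall>i. x (i + v) = x i - real_of_int c)" for v c
  have base: "P (p j) (q j)" for j
  proof -
    have "tau (p j) (q j) x = x" using assms unfolding Xpq_def by blast
    then have "x (i + p j) + real_of_int (q j) = x i" for i
      unfolding tau_def by (metis (no_types, lifting))
    then show ?thesis unfolding P_def by (simp add: algebra_simps)
  qed
  have Pneg: "P v c \<Longrightarrow> P (-v) (-c)" for v c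
  proof -
    assume "P v c"
    then have "x (i - v + v) = x (i - v) - real_of_int c" for i unfolding P_def by blast
    then show "P (-v) (-c)" unfolding P_def by (simp add: algebra_simps)
  qed
  have Padd: "P v1 c1 \<Longrightarrow> P v2 c2 \<Longrightarrow> P (v1 + v2) (c1 + c2)" for v1 c1 v2 c2
    unfolding P_def by (metis add.assoc diff_diff_eq of_int_add)
  have P0: "P 0 0" unfolding P_def by simp
  have Pnat: "P v c \<Longrightarrow> P (of_nat m *s v) (of_nat m * c)" for v c m
  proof (induction m)
    case 0 then show ?case using P0 by (simp add: vec_eq_iff)
  next
    case (Suc m)
    have eq1: "of_nat (Suc m) *s v = of_nat m *s v + v" by (simp add: vec_eq_iff algebra_simps)
    have eq2: "of_nat (Suc m) * c = of_nat m * c + c" by (simp add: algebra_simps)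
    have "P (of_nat m *s v + v) (of_nat m * c + c)" by (rule Padd[OF Suc.IH[OF Suc.prems] Suc.prems])
    then show ?case unfolding eq1 eq2 .
  qed
  have Pint: "P v c \<Longrightarrow> P (m *s v) (m * c)" for v c and m :: int
  proof (cases m rule: int_cases)
    case (nonneg k) then show "P v c \<Longrightarrow> P (m *s v) (m * c)" using Pnat by simp
  next
    case (neg k)
    assume "P v c"
    then have "P (- (of_nat (Suc k) *s v)) (- (of_nat (Suc k) * c))" using Pnat Pneg by blast
    moreover have "m *s v = - (of_nat (Suc k) *s v)" using neg by (simp add: vec_eq_iff)
    moreover have "m * c = - (of_nat (Suc k) * c)" using neg by (simp add: ring_distribs)
    ultimately show ?thesis by simp
  qed
  have "finite A \<Longrightarrow> P (\<Sum>j\<in>A. n j *s p j) (\<Sum>j\<in>A. n j * q j)" for A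
  proof (induction A rule: finite_induct)
    case empty then show ?case using P0 by simp
  next
    case (insert a A)
    then show ?case using Padd[OF Pint[OF base]] by simp
  qed
  then show ?thesis unfolding P_def by simp
qed

lemma sgn_sub: "(z::int) \<noteq> 0 \<Longrightarrow> \<bar>z - sgn z\<bar> = \<bar>z\<bar> - 1"
  by (cases "z > 0") (auto simp: sgn_if)

lemma l1norm_split: "l1norm i = \<bar>i$k\<bar> + (\<Sum>m\<in>UNIV-{k}. \<bar>i$m\<bar>)"
  unfolding l1norm_def by (simp add: sum.remove)

lemma path_bound:
  fixes y :: "int^'d \<Rightarrow> real"
  assumes nb: "\<And>j e. l1norm e = 1 \<Longrightarrow> \<bar>y (e + j) - y j\<bar> \<le> R"
  shows "\<bar>y i - y 0\<bar> \<le> R * real_of_int (l1norm i)"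
proof -
  have nn: "l1norm i \<ge> 0" for i :: "int^'d" unfolding l1norm_def by (simp add: sum_nonneg)
  have "nat (l1norm i) = n \<Longrightarrow> \<bar>y i - y 0\<bar> \<le> R * real_of_int (l1norm i)" for n
  proof (induction n arbitrary: i)
    case 0
    then have "l1norm i = 0" using nn[of i] by simp
    then have "i = 0" using abs_le_l1norm[of i] by (simp add: vec_eq_iff)
    then show ?case using \<open>l1norm i = 0\<close> by simp
  next
    case (Suc n)
    then have "i \<noteq> 0" by (auto simp: l1norm_def)
    then obtain k where k: "i$k \<noteq> 0" by (auto simp: vec_eq_iff)
    define e where "e = axis k (sgn (i$k))"
    have e1: "l1norm e = 1"
      unfolding l1norm_split[of e k] using k by (simp add: e_def axis_def abs_sgn)
    have rest: "(\<Sum>m\<in>UNIV-{k}. \<bar>(i-e)$m\<bar>) = (\<Sum>m\<in>UNIV-{k}. \<bar>i$m\<bar>)"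
      by (rule sum.cong) (auto simp: e_def axis_def)
    have ie: "l1norm (i - e) = l1norm i - 1"
      unfolding l1norm_split[of "i-e" k] l1norm_split[of i k] rest
      using k sgn_sub[of "i$k"] by (simp add: e_def axis_def)
    then have "nat (l1norm (i - e)) = n" using Suc.prems by simp
    then have IH: "\<bar>y (i-e) - y 0\<bar> \<le> R * real_of_int (l1norm i - 1)" using Suc.IH ie by metis
    have "\<bar>y (e + (i - e)) - y (i - e)\<bar> \<le> R" using nb e1 by blast
    then have "\<bar>y i - y (i - e)\<bar> \<le> R" by simp
    with IH show ?case by (simp add: algebra_simps)
  qed
  then show ?thesis by blast
qed

lemma compact_box: "compact {x::'i\<Rightarrow>real. \<forall>i. \<bar>x i\<bar> \<le> c i}"
proof -
  have QE: "{x::'i\<Rightarrow>real. \<forall>i. \<bar>x i\<bar> \<le> c i} = PiE UNIV (\<lambda>i. {-c i..c i})"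
    by (auto simp: PiE_iff abs_le_iff minus_le_iff)
  have "compactin (product_topology (\<lambda>_. euclidean) UNIV) (PiE UNIV (\<lambda>i. {-c i..c i::real}))"
    by (simp add: compactin_PiE)
  then show ?thesis unfolding QE euclidean_product_topology by simp
qed



theorem mainTheorem3:
  fixes S :: "int^'d \<Rightarrow> (int^'d \<Rightarrow> real) \<Rightarrow> real"
    and p :: "'d \<Rightarrow> int^'d"
    and q :: "'d \<Rightarrow> int"
  assumes "local_potentials S"
    and "lin_indep_cols p"
  shows "\<exists>x\<in>Xpq p q. \<forall>y\<in>Xpq p q. Wpq S p x \<le> Wpq S p y"
proof -
  note LP = assms(1)[unfolded local_potentials_def]
  have "\<exists>r>0. (\<forall>j x y. (\<forall>k\<in>ball1 j r. x k = y k) \<longrightarrow> S j x = S j y) \<and> (\<forall>j. C2 (S j))"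
    using LP by (rule conjunct1)
  then obtain r where r: "\<forall>j x y. (\<forall>k\<in>ball1 j r. x k = y k) \<longrightarrow> S j x = S j y" "\<forall>j. C2 (S j)"
    by blast
  have loc: "\<And>j x y. (\<forall>k\<in>ball1 j r. x k = y k) \<Longrightarrow> S j x = S j y" using r(1) by blast
  have c2: "\<And>j. C2 (S j)" using r(2) by blast
  note L2 = LP[THEN conjunct2, THEN conjunct1]
  note L3 = LP[THEN conjunct2, THEN conjunct2, THEN conjunct1]
  note L4 = LP[THEN conjunct2, THEN conjunct2, THEN conjunct2, THEN conjunct1]
  have sh: "\<And>j k l x. S j (tau k l x) = S (j + k) x" using L2 by blast
  have bb: "bdd_below (range (S 0))" by (rule L3[rule_format])
  have co: "\<And>j k. l1norm (k - j) = 1 \<Longrightarrow> \<forall>M. \<exists>R. \<forall>x. \<bar>x k - x j\<bar> > R \<longrightarrow> S j x > M"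
    using L4 by blast
  define B where "B = Bp p"
  have finB: "finite B" unfolding B_def by (rule finite_Bp)
  define W where "W = Wpq S p"
  have Wdef: "W x = (\<Sum>j\<in>B. S j x)" for x unfolding W_def Wpq_def B_def by simp
  obtain c0 where c0: "\<And>y. c0 \<le> S 0 y" using bb unfolding bdd_below_def by auto
  have lowS: "c0 \<le> S j y" for j y
    using c0[of "tau j 0 y"] sh[of 0 j 0 y] by simp
  have shiftX: "(\<lambda>i. y i + real_of_int l) \<in> Xpq p q" if "y \<in> Xpq p q" for y l
  proof -
    have "tau (p j) (q j) y = y" for j using that unfolding Xpq_def by blast
    then show ?thesis unfolding Xpq_def tau_def by (simp add: fun_eq_iff)
  qed
  have shiftW: "W (\<lambda>i. y i + real_of_int l) = W y" for y l
  proof -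
    have "(\<lambda>i. y i + real_of_int l) = tau 0 l y" unfolding tau_def by simp
    then show ?thesis unfolding Wdef using sh[of _ 0 l y] by simp
  qed
  define v where "v j = rv (p j)" for j
  have injv: "inj v" unfolding v_def by (rule rv_inj[OF assms(2)])
  obtain g where g: "linear g" "\<forall>w\<in>range v. g w = - real_of_int (q (inv v w))"
    using linear_independent_extend[OF rv_indep[OF assms(2)], of "\<lambda>w. - real_of_int (q (inv v w))"]
    unfolding v_def by blast
  have gv: "g (v j) = - real_of_int (q j)" for j using g(2) injv by simp
  define x0 where "x0 i = g (rv i)" for i
  have rvadd: "rv (a + b) = rv a + rv b" for a b by (simp add: rv_def vec_eq_iff)
  have x0X: "x0 \<in> Xpq p q"
    unfolding Xpq_def tau_def x0_def
    using gv linear_add[OF g(1)] by (simp add: rvadd v_def fun_eq_iff)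
  define M where "M = W x0"
  define M' where "M' = M + real (card B) * \<bar>c0\<bar>"
  have Sb: "S b y \<le> M'" if y: "y \<in> Xpq p q" "W y \<le> M" and b: "b \<in> B" for y b
  proof -
    have "W y = S b y + (\<Sum>j\<in>B-{b}. S j y)" unfolding Wdef using finB b by (simp add: sum.remove)
    moreover have "real (card (B-{b})) * c0 \<le> (\<Sum>j\<in>B-{b}. S j y)"
      by (rule sum_bounded_below) (rule lowS)
    moreover have "- (real (card (B-{b})) * \<bar>c0\<bar>) \<le> real (card (B-{b})) * c0"
      using mult_left_mono[of "-\<bar>c0\<bar>" c0 "real (card (B-{b}))"] by simp
    moreover have "real (card (B-{b})) * \<bar>c0\<bar> \<le> real (card B) * \<bar>c0\<bar>"
      by (rule mult_right_mono) (auto simp: card_Diff1_le)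
    ultimately show ?thesis using y unfolding M'_def by linarith
  qed
  have Sall: "S j y \<le> M'" if y: "y \<in> Xpq p q" "W y \<le> M" for y j
  proof -
    obtain b n where b: "b \<in> B" and jb: "j = b + (\<Sum>k\<in>UNIV. n k *s p k)"
      using decomp[OF assms(2)] unfolding B_def by blast
    define c where "c = (\<Sum>k\<in>UNIV. n k * q k)"
    have "tau (\<Sum>k\<in>UNIV. n k *s p k) c y = y"
      unfolding tau_def c_def using lat[OF y(1)] by (simp add: fun_eq_iff)
    then have "S j y = S b y" using sh[of b "\<Sum>k\<in>UNIV. n k *s p k" c y] jb by simp
    then show ?thesis using Sb[OF y b] by simp
  qed
  have "\<forall>e. \<exists>R. l1norm e = 1 \<longrightarrow> (\<forall>y. \<bar>y e - y 0\<bar> > R \<longrightarrow> S 0 y > M')"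
    using co[of _ 0] by auto
  then obtain Rf where Rf: "\<And>e y. l1norm e = 1 \<Longrightarrow> \<bar>y e - y 0\<bar> > Rf e \<Longrightarrow> S 0 y > M'"
    by metis
  define U where "U = {e::int^'d. l1norm e = 1}"
  define Rr where "Rr = (\<Sum>e\<in>U. \<bar>Rf e\<bar>)"
  have nb: "\<bar>y (e + j) - y j\<bar> \<le> Rr" if y: "y \<in> Xpq p q" "W y \<le> M" and e: "l1norm e = 1" for y e j
  proof -
    have "S 0 (tau j 0 y) = S j y" using sh[of 0 j 0 y] by simp
    then have "\<not> S 0 (tau j 0 y) > M'" using Sall[OF y, of j] by simp
    then have "\<not> \<bar>tau j 0 y e - tau j 0 y 0\<bar> > Rf e" using Rf[OF e] by blast
    then have "\<bar>y (e + j) - y j\<bar> \<le> Rf e" unfolding tau_def by simp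
    also have "\<dots> \<le> \<bar>Rf e\<bar>" by simp
    also have "\<dots> \<le> Rr" unfolding Rr_def
      by (rule member_le_sum) (use e finite_units in \<open>auto simp: U_def\<close>)
    finally show ?thesis .
  qed
  define cc where "cc i = 1 + Rr * real_of_int (l1norm i)" for i :: "int^'d"
  define Q where "Q = {x::int^'d\<Rightarrow>real. \<forall>i. \<bar>x i\<bar> \<le> cc i}"
  define K where "K = {y \<in> Xpq p q. 0 \<le> y 0 \<and> y 0 \<le> 1 \<and> W y \<le> M}"
  have KQ: "K \<subseteq> Q"
  proof
    fix y assume "y \<in> K"
    then have y: "y \<in> Xpq p q" "W y \<le> M" "0 \<le> y 0" "y 0 \<le> 1" unfolding K_def by auto
    have h: "\<bar>y i - y 0\<bar> \<le> Rr * real_of_int (l1norm i)" for i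
      by (rule path_bound) (rule nb[OF y(1,2)])
    have "\<bar>y i\<bar> \<le> cc i" for i using h[of i] y(3,4) unfolding cc_def by (simp add: abs_le_iff)
    then show "y \<in> Q" unfolding Q_def by blast
  qed
  have cQ: "compact Q" unfolding Q_def by (rule compact_box)
  have contW: "continuous_on Q W"
    unfolding Wdef[abs_def] Q_def
    by (intro continuous_on_sum cont_local[OF finite_ball1] loc c2) auto
  have clX: "closed (Xpq p q)"
  proof -
    have "Xpq p q = {x. \<forall>j. \<forall>i. x (i + p j) + real_of_int (q j) = x i}"
      unfolding Xpq_def tau_def by (auto simp: fun_eq_iff)
    also have "closed \<dots>"
      by (intro closed_Collect_all closed_Collect_eq continuous_intros) simp_all
    finally show ?thesis .
  qed
  have cl0: "closed {y::int^'d\<Rightarrow>real. 0 \<le> y 0 \<and> y 0 \<le> 1}"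
    by (intro closed_Collect_conj closed_Collect_le continuous_intros) simp_all
  have KE: "K = (Q \<inter> W -` {..M}) \<inter> (Xpq p q \<inter> {y. 0 \<le> y 0 \<and> y 0 \<le> 1})"
    using KQ unfolding K_def by auto
  have "closed (Q \<inter> W -` {..M})"
    by (rule continuous_closed_preimage[OF contW compact_imp_closed[OF cQ]]) simp
  then have clK: "closed K" unfolding KE by (rule closed_Int) (intro closed_Int clX cl0)
  have compK: "compact K"
  proof -
    have "compact (Q \<inter> K)" using cQ clK by blast
    moreover have "Q \<inter> K = K" using KQ by blast
    ultimately show ?thesis by simp
  qed
  define x0' where "x0' = (\<lambda>i. x0 i + real_of_int (- \<lfloor>x0 0\<rfloor>))"
  have x0'X: "x0' \<in> Xpq p q" unfolding x0'_def by (rule shiftX[OF x0X])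
  have x0'W: "W x0' = M" unfolding x0'_def shiftW M_def ..
  have x0'0: "0 \<le> x0' 0 \<and> x0' 0 \<le> 1" unfolding x0'_def by simp linarith
  have x0'K: "x0' \<in> K" unfolding K_def using x0'X x0'W x0'0 by simp
  obtain x where xK: "x \<in> K" and xmin: "\<And>y. y \<in> K \<Longrightarrow> W x \<le> W y"
    using continuous_attains_inf[OF compK _ continuous_on_subset[OF contW KQ]] x0'K by blast
  have "\<forall>y\<in>Xpq p q. W x \<le> W y"
  proof
    fix y assume yX: "y \<in> Xpq p q"
    show "W x \<le> W y"
    proof (cases "W y \<le> M")
      case True
      define y' where "y' = (\<lambda>i. y i + real_of_int (- \<lfloor>y 0\<rfloor>))"
      have y'X: "y' \<in> Xpq p q" unfolding y'_def by (rule shiftX[OF yX])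
      have y'W: "W y' = W y" unfolding y'_def shiftW ..
      have y'0: "0 \<le> y' 0 \<and> y' 0 \<le> 1" unfolding y'_def by simp linarith
      have "y' \<in> K" unfolding K_def using y'X y'W y'0 True by simp
      then have "W x \<le> W y'" by (rule xmin)
      then show ?thesis unfolding y'_def shiftW .
    next
      case False
      have "W x \<le> W x0'" by (rule xmin[OF x0'K])
      also have "\<dots> = M" unfolding x0'_def shiftW M_def ..
      finally show ?thesis using False by simp
    qed
  qed
  then show ?thesis using xK unfolding K_def W_def by auto
qed

end
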